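(* Let $d\geq1$, $q\geq1$, $0<\alpha<d$. Then there exists $C>0$ such that for every $a\in\mathbb{R}^d$ and every measurable function $u$ on $\mathbb{R}^d$, $$\int_0^\infty\left(\fint_{B_\rho(a)}|u(y)|\,dy\right)^q\rho^{(d-\alpha)q+d-1}\,d\rho\leq C\left\|\tfrac{1}{|x|^\alpha}\star|u|\right\|_{L^q(\mathbb{R}^d)}^q.$$
   Context: $B_\rho(a)$ is the open ball of radius $\rho$ centered at $a$, $\fint_{B}$ denotes the average over $B$ (integral divided by Lebesgue measure of $B$), and $\star$ denotes convolution. *)

theory Defs
  imports "HOL-Analysis.Analysis"
begin

definition epowr :: "ennreal \<Rightarrow> real \<Rightarrow> ennreal" where
  "epowr x q = (if x = \<infinity> then \<infinity> else ennreal (enn2real x powr q))"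

definition ball_avg :: "('a::euclidean_space \<Rightarrow> real) \<Rightarrow> 'a \<Rightarrow> real \<Rightarrow> ennreal" where
  "ball_avg u a \<rho> =
     (\<integral>\<^sup>+ y \<in> ball a \<rho>. ennreal \<bar>u y\<bar> \<partial>lebesgue) / emeasure lebesgue (ball a \<rho>)"

definition riesz_conv :: "real \<Rightarrow> ('a::euclidean_space \<Rightarrow> real) \<Rightarrow> 'a \<Rightarrow> ennreal" where
  "riesz_conv \<alpha> u x = (\<integral>\<^sup>+ y. ennreal (\<bar>u y\<bar> / norm (x - y) powr \<alpha>) \<partial>lebesgue)"

end

theory Submission
  imports Defs
begin
lemma mono_ennreal_borel:
  fixes f :: "real \<Rightarrow> ennreal"
  assumes "mono f"
  shows "f \<in> borel_measurable borel"
proof (rule borel_measurableI_greater)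
  fix t
  have "is_interval {x. t < f x}"
    unfolding is_interval_1 
  proof (intro ballI allI impI)
    fix x y z assume "x \<in> {x. t < f x}" "y \<in> {x. t < f x}" "x \<le> z \<and> z \<le> y"
    then show "z \<in> {x. t < f x}" using assms[unfolded mono_def, rule_format, of x z] by auto
  qed
  then show "{x \<in> space borel. t < f x} \<in> sets borel"
    using real_interval_borel_measurable by simp
qed
lemma measurable_epowr[measurable]:
  assumes [measurable]: "f \<in> borel_measurable M"
  shows "(\<lambda>x. epowr (f x) q) \<in> borel_measurable M"
  unfolding epowr_def by measurable

lemma ann_meas:
  fixes a :: "'a::euclidean_space"
  shows "Measurable.pred (lborel \<Otimes>\<^sub>M lborel) (\<lambda>p::real\<times>'a. fst p \<le> dist a (snd p) \<and> dist a (snd p) \<le> 2 * fst p)"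
  by measurable
lemma emeasure_annulus:
  fixes a :: "'a::euclidean_space"
  assumes "\<rho> > 0"
  shows "emeasure lborel {x. \<rho> \<le> dist a x \<and> dist a x \<le> 2*\<rho>}
     = ennreal (measure lborel (ball (0::'a) 1) * (2 ^ DIM('a) - 1) * \<rho> ^ DIM('a))"
proof -
  let ?w = "measure lborel (ball (0::'a) 1)"
  have w: "?w \<ge> 0" by simp
  have eq: "{x. \<rho> \<le> dist a x \<and> dist a x \<le> 2*\<rho>} = cball a (2*\<rho>) - ball a \<rho>"
    by auto
  have "emeasure lborel (cball a (2*\<rho>) - ball a \<rho>) = emeasure lborel (cball a (2*\<rho>)) - emeasure lborel (ball a \<rho>)"
    using assms emeasure_lborel_ball_finite[of a \<rho>]
    by (intro emeasure_Diff) auto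
  also have "emeasure lborel (cball a (2*\<rho>)) = ennreal (measure lborel (cball a (2*\<rho>)))"
    using emeasure_lborel_cball_finite[of a "2*\<rho>"] by (simp add: emeasure_eq_ennreal_measure)
  also have "\<dots> = ennreal ((2*\<rho>)^DIM('a) * ?w)"
    using assms content_cball_conv_ball[of a "2*\<rho>"] content_ball_conv_unit_ball[of "2*\<rho>" a] by simp
  also have "emeasure lborel (ball a \<rho>) = ennreal (measure lborel (ball a \<rho>))"
    using emeasure_lborel_ball_finite[of a "\<rho>"] by (simp add: emeasure_eq_ennreal_measure)
  also have "\<dots> = ennreal (\<rho>^DIM('a) * ?w)"
    using assms content_ball_conv_unit_ball[of "\<rho>" a] by simp
  also have "ennreal ((2*\<rho>)^DIM('a) * ?w) - ennreal (\<rho>^DIM('a) * ?w)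
     = ennreal ((2*\<rho>)^DIM('a) * ?w - \<rho>^DIM('a) * ?w)"
    using w assms by (intro ennreal_minus) simp
  also have "(2*\<rho>)^DIM('a) * ?w - \<rho>^DIM('a) * ?w = ?w * (2 ^ DIM('a) - 1) * \<rho> ^ DIM('a)"
    by (simp add: power_mult_distrib algebra_simps)
  finally show ?thesis using eq by simp
qed
lemma F_bound:
  fixes a x :: "'a::euclidean_space" and u :: "'a \<Rightarrow> real"
  assumes [measurable]: "u \<in> borel_measurable lebesgue" and "0 < \<rho>" "\<rho> \<le> dist a x" "0 \<le> \<alpha>"
  shows "(\<integral>\<^sup>+ y \<in> ball a \<rho>. ennreal \<bar>u y\<bar> \<partial>lebesgue) \<le> ennreal ((2*dist a x) powr \<alpha>) * riesz_conv \<alpha> u x"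
proof -
  let ?r = "dist a x"
  have r: "?r > 0" using assms by linarith
  let ?c = "(2*?r) powr \<alpha>"
  have c: "?c > 0" using r by simp
  have "(\<integral>\<^sup>+ y \<in> ball a \<rho>. ennreal \<bar>u y\<bar> \<partial>lebesgue)
      = (\<integral>\<^sup>+ y. ennreal ?c * (ennreal (\<bar>u y\<bar> / ?c) * indicator (ball a \<rho>) y) \<partial>lebesgue)"
    using c by (intro nn_integral_cong) (auto simp: ennreal_mult'[symmetric] indicator_def)
  also have "\<dots> = ennreal ?c * (\<integral>\<^sup>+ y. ennreal (\<bar>u y\<bar> / ?c) * indicator (ball a \<rho>) y \<partial>lebesgue)"
  proof (intro nn_integral_cmult)
    have [measurable]: "ball a \<rho> \<in> sets lebesgue" by simp
    show "(\<lambda>y. ennreal (\<bar>u y\<bar> / ?c) * indicator (ball a \<rho>) y) \<in> borel_measurable lebesgue"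
      by measurable
  qed
  also have "\<dots> \<le> ennreal ?c * riesz_conv \<alpha> u x"
    unfolding riesz_conv_def
  proof (intro mult_left_mono nn_integral_mono)
    fix y
    show "ennreal (\<bar>u y\<bar> / ?c) * indicator (ball a \<rho>) y \<le> ennreal (\<bar>u y\<bar> / norm (x - y) powr \<alpha>)"
    proof (cases "y \<in> ball a \<rho>")
      case True
      have ya: "dist a y < \<rho>" using True by simp
      have t: "dist a x \<le> dist a y + dist y x" by (rule dist_triangle)
      have "dist y x > 0" using ya assms t by linarith
      then have "norm (x - y) > 0" by (simp add: dist_norm norm_minus_commute)
      moreover have "norm (x - y) \<le> 2 * ?r"
        using ya assms dist_triangle[of x y a] by (simp add: dist_norm[symmetric] dist_commute)
      ultimately have "norm (x - y) powr \<alpha> \<le> ?c" 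
        using assms by (intro powr_mono2) auto
      then have "\<bar>u y\<bar> / ?c \<le> \<bar>u y\<bar> / norm (x - y) powr \<alpha>"
        using \<open>norm (x - y) > 0\<close> c by (intro divide_left_mono) auto
      then show ?thesis using True by (simp add: ennreal_leI)
    qed simp
  qed simp
  finally show ?thesis .
qed
lemma real_ineq:
  fixes \<omega> c2 q \<alpha> \<rho> r f i :: real and n :: nat
  assumes w: "\<omega> > 0" and c2: "c2 > 0" and q: "q > 0" and al: "\<alpha> \<ge> 0"
    and rho: "0 < \<rho>" "\<rho> \<le> r" "r \<le> 2*\<rho>" and f: "0 \<le> f" "f \<le> (2*r) powr \<alpha> * i" and i: "i \<ge> 0"
  shows "(f / (\<rho>^n * \<omega>)) powr q * \<rho> powr ((real n - \<alpha>) * q + real n - 1) * (1 / (\<omega> * c2 * \<rho>^n))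
     \<le> (2 * (4 powr (\<alpha>*q) / (\<omega> powr q * \<omega> * c2)) / r) * i powr q"
proof -
  have r: "r > 0" using rho by linarith
  let ?Q = "(2*r) powr \<alpha> * i / (\<rho>^n * \<omega>)"
  have "(f / (\<rho>^n * \<omega>)) powr q \<le> ?Q powr q"
    using f w rho by (intro powr_mono2 divide_right_mono) (auto intro: less_imp_le q)
  also have "?Q powr q = (2*r) powr (\<alpha>*q) * i powr q / (\<rho> powr (real n * q) * \<omega> powr q)"
    using r rho w i by (simp add: powr_divide powr_mult powr_powr powr_realpow[symmetric])
  finally have 1: "(f / (\<rho>^n * \<omega>)) powr q \<le> (2*r) powr (\<alpha>*q) * i powr q / (\<rho> powr (real n * q) * \<omega> powr q)" .
  have 2: "\<rho> powr ((real n - \<alpha>) * q + real n - 1) = \<rho> powr (real n * q) * \<rho>^n * \<rho> powr (-(\<alpha>*q)) / \<rho>"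
  proof -
    have e: "(real n - \<alpha>) * q + real n - 1 = real n * q + real n + (-(\<alpha>*q)) + (-1)"
      by (simp add: algebra_simps)
    have "\<rho> powr (real n * q + real n + (-(\<alpha>*q)) + (-1)) = \<rho> powr (real n * q) * \<rho> powr (real n) * \<rho> powr (-(\<alpha>*q)) * \<rho> powr (-1)"
      by (simp only: powr_add)
    also have "\<rho> powr (-1) = 1 / \<rho>" using rho by (simp add: powr_minus divide_inverse)
    also have "\<rho> powr (real n) = \<rho>^n" using rho by (simp add: powr_realpow)
    finally show ?thesis unfolding e by simp
  qed
  have 3: "(2*r) powr (\<alpha>*q) * \<rho> powr (-(\<alpha>*q)) \<le> 4 powr (\<alpha>*q)"
  proof -
    have "(2*r) powr (\<alpha>*q) * \<rho> powr (-(\<alpha>*q)) = (2*r/\<rho>) powr (\<alpha>*q)"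
      using r rho by (simp add: powr_minus powr_divide[symmetric] divide_inverse[symmetric])
    also have "\<dots> \<le> 4 powr (\<alpha>*q)"
      using r rho al q by (intro powr_mono2) (auto simp: divide_le_eq)
    finally show ?thesis .
  qed
  have 4: "1 / \<rho> \<le> 2 / r" using rho r by (simp add: divide_simps)
  have "(f / (\<rho>^n * \<omega>)) powr q * \<rho> powr ((real n - \<alpha>) * q + real n - 1) * (1 / (\<omega> * c2 * \<rho>^n))
     \<le> (2*r) powr (\<alpha>*q) * i powr q / (\<rho> powr (real n * q) * \<omega> powr q) * \<rho> powr ((real n - \<alpha>) * q + real n - 1) * (1 / (\<omega> * c2 * \<rho>^n))"
    using 1 rho w c2 by (intro mult_right_mono) auto
  also have "\<dots> = ((2*r) powr (\<alpha>*q) * \<rho> powr (-(\<alpha>*q))) * (1/\<rho>) * i powr q / (\<omega> powr q * \<omega> * c2)"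
    unfolding 2 using rho w c2 by (simp add: field_simps)
  also have "\<dots> \<le> 4 powr (\<alpha>*q) * (2/r) * i powr q / (\<omega> powr q * \<omega> * c2)"
    using 3 4 w c2 rho by (intro divide_right_mono mult_right_mono mult_mono) auto
  also have "\<dots> = (2 * (4 powr (\<alpha>*q) / (\<omega> powr q * \<omega> * c2)) / r) * i powr q"
    by (simp add: field_simps)
  finally show ?thesis .
qed
lemma mono_ennreal_lborel:
  fixes f :: "real \<Rightarrow> ennreal"
  assumes "mono f"
  shows "f \<in> borel_measurable lborel"
  using mono_ennreal_borel[OF assms] by simp

theorem lemma2p3:
  fixes q \<alpha> :: real
  assumes "q \<ge> 1" and "0 < \<alpha>" and "\<alpha> < real DIM('a::euclidean_space)"
  shows "\<exists>C>0. \<forall>(a::'a) (u::'a \<Rightarrow> real). u \<in> borel_measurable lebesgue \<longrightarrow>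
           (\<integral>\<^sup>+ \<rho> \<in> {0<..}. epowr (ball_avg u a \<rho>) q
               * ennreal (\<rho> powr ((real DIM('a) - \<alpha>) * q + real DIM('a) - 1)) \<partial>lborel)
           \<le> ennreal C * (\<integral>\<^sup>+ x. epowr (riesz_conv \<alpha> u x) q \<partial>lebesgue)"
proof -
  define d where "d = DIM('a)"
  define \<omega> where "\<omega> = measure lborel (ball (0::'a) 1)"
  define c2 :: real where "c2 = 2 ^ d - 1"
  define K where "K = 4 powr (\<alpha>*q) / (\<omega> powr q * \<omega> * c2)"
  define \<beta> where "\<beta> = (real d - \<alpha>) * q + real d - 1"
  have w: "\<omega> > 0" unfolding \<omega>_def using content_ball_pos[of 1 "0::'a"] by simp
  have d1: "d \<ge> 1" unfolding d_def using DIM_positive[where 'a='a] by linarith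
  have "(2::real)^1 \<le> 2^d" using d1 by (intro power_increasing) auto
  then have c2: "c2 > 0" unfolding c2_def by simp
  have K: "K > 0" unfolding K_def using w c2 by simp
  have q0: "q > 0" using assms by simp
  have wl: "emeasure lebesgue (ball (0::'a) 1) = ennreal \<omega>"
    unfolding \<omega>_def using emeasure_lborel_ball_finite[of "0::'a" 1]
    by (simp add: emeasure_eq_ennreal_measure)
  show ?thesis
  proof (intro exI[of _ K] conjI allI impI K)
    fix a :: 'a and u :: "'a \<Rightarrow> real"
    assume [measurable]: "u \<in> borel_measurable lebesgue"
    define F where "F \<rho> = (\<integral>\<^sup>+ y \<in> ball a \<rho>. ennreal \<bar>u y\<bar> \<partial>lebesgue)" for \<rho>
    define V where "V \<rho> = emeasure lebesgue (ball a \<rho>)" for \<rho>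
    define h where "h \<rho> = epowr (ball_avg u a \<rho>) q * ennreal (\<rho> powr \<beta>) * indicator {0<..} \<rho>" for \<rho>
    define S where "S \<rho> = {x. \<rho> \<le> dist a x \<and> dist a x \<le> 2*\<rho>}" for \<rho>
    define M where "M \<rho> x = h \<rho> * ennreal (1 / (\<omega> * c2 * \<rho>^d)) * indicator (S \<rho>) x" for \<rho> x
    define E where "E x = epowr (riesz_conv \<alpha> u x) q" for x
    have avg: "ball_avg u a \<rho> = F \<rho> / V \<rho>" for \<rho>
      unfolding ball_avg_def F_def V_def ..
    have Fm: "F \<in> borel_measurable lborel"
      by (intro mono_ennreal_lborel monoI) (auto simp: F_def intro!: nn_integral_mono split: split_indicator)
    have Vm: "V \<in> borel_measurable lborel"
      by (intro mono_ennreal_lborel monoI) (auto simp: V_def intro!: emeasure_mono)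
    have hm[measurable]: "h \<in> borel_measurable lborel"
    proof -
      have [measurable]: "F \<in> borel_measurable borel" "V \<in> borel_measurable borel" using Fm Vm by simp_all
      show ?thesis unfolding h_def avg by measurable
    qed
    have Mm[measurable]: "(\<lambda>p. M (snd p) (fst p)) \<in> borel_measurable (lborel \<Otimes>\<^sub>M lborel)"
    proof -
      have P: "Measurable.pred (lborel \<Otimes>\<^sub>M lborel) (\<lambda>p::'a\<times>real. snd p \<le> dist a (fst p) \<and> dist a (fst p) \<le> 2 * snd p)"
        by measurable
      have [measurable]: "{p::'a\<times>real. snd p \<le> dist a (fst p) \<and> dist a (fst p) \<le> 2 * snd p} \<in> sets (lborel \<Otimes>\<^sub>M lborel)"
        using predE[OF P] by (simp add: space_pair_measure)
      have eq: "(\<lambda>p. M (snd p) (fst p)) = (\<lambda>p. h (snd p) * ennreal (1 / (\<omega> * c2 * (snd p)^d)) * indicator {p::'a\<times>real. snd p \<le> dist a (fst p) \<and> dist a (fst p) \<le> 2 * snd p} p)"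
        by (auto simp: M_def S_def indicator_def fun_eq_iff)
      show ?thesis unfolding eq by measurable
    qed
    have step1: "h \<rho> = (\<integral>\<^sup>+ x. M \<rho> x \<partial>lborel)" for \<rho>
    proof (cases "\<rho> > 0")
      case False
      then show ?thesis by (simp add: h_def M_def)
    next
      case True
      let ?m = "\<omega> * c2 * \<rho>^d"
      have m: "?m > 0" using True w c2 by simp
      have Ss: "S \<rho> \<in> sets lborel"
      proof -
        have "S \<rho> = cball a (2*\<rho>) - ball a \<rho>" unfolding S_def by auto
        then show ?thesis by simp
      qed
      have "(\<integral>\<^sup>+ x. M \<rho> x \<partial>lborel) = (h \<rho> * ennreal (1 / ?m)) * emeasure lborel (S \<rho>)"
        unfolding M_def using Ss by (rule nn_integral_cmult_indicator)
      also have "emeasure lborel (S \<rho>) = ennreal ?m"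
        unfolding S_def \<omega>_def c2_def d_def using emeasure_annulus[OF True, of a] by simp
      also have "h \<rho> * ennreal (1 / ?m) * ennreal ?m = h \<rho>"
      proof -
        have "ennreal (1 / ?m) * ennreal ?m = ennreal (1 / ?m * ?m)"
          using m by (intro ennreal_mult'[symmetric]) simp
        also have "1 / ?m * ?m = 1"
        proof -
          have m0: "?m \<noteq> 0" using m by (rule less_imp_neq[THEN not_sym])
          show ?thesis by (simp only: inverse_eq_divide[symmetric] left_inverse[OF m0])
        qed
        finally show ?thesis by (simp add: mult.assoc)
      qed
      finally show ?thesis by simp
    qed
    have LHS: "(\<integral>\<^sup>+ \<rho> \<in> {0<..}. epowr (ball_avg u a \<rho>) q
               * ennreal (\<rho> powr ((real DIM('a) - \<alpha>) * q + real DIM('a) - 1)) \<partial>lborel)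
          = (\<integral>\<^sup>+ \<rho>. h \<rho> \<partial>lborel)"
      unfolding h_def \<beta>_def d_def ..
    also have "\<dots> = (\<integral>\<^sup>+ \<rho>. (\<integral>\<^sup>+ x. M \<rho> x \<partial>lborel) \<partial>lborel)"
      using step1 by simp
    also have "\<dots> = (\<integral>\<^sup>+ x. (\<integral>\<^sup>+ \<rho>. M \<rho> x \<partial>lborel) \<partial>lborel)"
    proof (rule lborel_pair.Fubini')
      have "case_prod (\<lambda>x \<rho>. M \<rho> x) = (\<lambda>p. M (snd p) (fst p))" by auto
      then show "case_prod (\<lambda>x \<rho>. M \<rho> x) \<in> borel_measurable (lborel \<Otimes>\<^sub>M lborel)" using Mm by simp
    qed
    also have "\<dots> \<le> ennreal K * (\<integral>\<^sup>+ x. E x \<partial>lebesgue)"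
    proof -
      define J where "J x = (\<integral>\<^sup>+ \<rho>. M \<rho> x \<partial>lborel)" for x
      have Jm[measurable]: "J \<in> borel_measurable lborel"
        unfolding J_def
      proof (rule lborel.borel_measurable_nn_integral)
        have "case_prod (\<lambda>x \<rho>. M \<rho> x) = (\<lambda>p. M (snd p) (fst p))" by auto
        then show "case_prod (\<lambda>x \<rho>. M \<rho> x) \<in> borel_measurable (lborel \<Otimes>\<^sub>M lborel)" using Mm by simp
      qed
      have pt: "J x \<le> ennreal K * E x" for x
      proof (cases "x = a")
        case True
        have "M \<rho> x = 0" for \<rho>
          using True by (cases "\<rho> > 0") (auto simp: M_def h_def S_def)
        then show ?thesis by (simp add: J_def)
      next
        case False
        define r where "r = dist a x"
        have r: "r > 0" using False by (simp add: r_def)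
        let ?c = "ennreal (2*K/r) * E x"
        have b: "M \<rho> x \<le> ?c * indicator {r/2..r} \<rho>" for \<rho>
        proof (cases "\<rho> > 0 \<and> x \<in> S \<rho>")
          case False
          then show ?thesis by (auto simp: M_def h_def)
        next
          case True
          then have rho: "0 < \<rho>" "\<rho> \<le> r" "r \<le> 2*\<rho>" by (auto simp: S_def r_def)
          have ind: "indicator {r/2..r} \<rho> = (1::ennreal)" using rho by (simp add: indicator_def)
          have Mx: "M \<rho> x = epowr (ball_avg u a \<rho>) q * ennreal (\<rho> powr \<beta>) * ennreal (1 / (\<omega> * c2 * \<rho>^d))"
            using True by (simp add: M_def h_def)
          have Fb: "F \<rho> \<le> ennreal ((2*r) powr \<alpha>) * riesz_conv \<alpha> u x"
            unfolding F_def r_def using rho assms by (intro F_bound) (auto simp: r_def)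
          show ?thesis
          proof (cases "riesz_conv \<alpha> u x = \<infinity>")
            case True
            then have "E x = \<infinity>" by (simp add: E_def epowr_def)
            then have "?c = \<infinity>" using r K by (simp add: ennreal_mult_eq_top_iff)
            then show ?thesis using ind by simp
          next
            case False
            define i where "i = enn2real (riesz_conv \<alpha> u x)"
            have i: "i \<ge> 0" "riesz_conv \<alpha> u x = ennreal i"
              using False by (auto simp: i_def less_top)
            have Ex: "E x = ennreal (i powr q)" using i by (simp add: E_def epowr_def)
            have Fb2: "F \<rho> \<le> ennreal ((2*r) powr \<alpha> * i)"
              using Fb i by (simp add: ennreal_mult')
            then have "F \<rho> \<noteq> \<infinity>" by (auto simp: top_unique)
            define f where "f = enn2real (F \<rho>)"
            have f: "f \<ge> 0" "F \<rho> = ennreal f"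
              using \<open>F \<rho> \<noteq> \<infinity>\<close> by (auto simp: f_def less_top)
            have fle: "f \<le> (2*r) powr \<alpha> * i"
              using Fb2 f i by (simp add: ennreal_le_iff)
            have Vr: "V \<rho> = ennreal (\<rho>^d * \<omega>)"
              unfolding V_def d_def using rho emeasure_lebesgue_ball_conv_unit_ball[of \<rho> a] wl
              by (simp add: ennreal_mult')
            have avg2: "ball_avg u a \<rho> = ennreal (f / (\<rho>^d * \<omega>))"
              unfolding avg Vr f(2) using rho w f by (intro divide_ennreal) auto
            have ep: "epowr (ball_avg u a \<rho>) q = ennreal ((f / (\<rho>^d * \<omega>)) powr q)"
              unfolding avg2 epowr_def using rho w f by simp
            have "M \<rho> x = ennreal ((f / (\<rho>^d * \<omega>)) powr q * \<rho> powr \<beta> * (1 / (\<omega> * c2 * \<rho>^d)))"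
            proof -
              have z0: "0 \<le> 1 / (\<omega> * c2 * \<rho>^d)" using w c2 rho by simp
              have y0: "0 \<le> \<rho> powr \<beta>" by simp
              show ?thesis unfolding Mx ep by (simp only: ennreal_mult''[OF z0] ennreal_mult''[OF y0])
            qed
            also have "\<dots> \<le> ennreal ((2 * (4 powr (\<alpha>*q) / (\<omega> powr q * \<omega> * c2)) / r) * i powr q)"
              unfolding \<beta>_def
              by (intro ennreal_leI real_ineq) (use w c2 q0 assms rho f fle i in auto)
            also have "\<dots> = ?c * indicator {r/2..r} \<rho>"
            proof -
              have kk: "(2 * (4 powr (\<alpha>*q) / (\<omega> powr q * \<omega> * c2)) / r) = 2*K/r" by (simp add: K_def)
              have i0: "0 \<le> i powr q" by simp
              show ?thesis unfolding ind Ex kk by (simp only: ennreal_mult''[OF i0] mult_1_right)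
            qed
            finally show ?thesis .
          qed
        qed
        have "J x \<le> (\<integral>\<^sup>+ \<rho>. ?c * indicator {r/2..r} \<rho> \<partial>lborel)"
          unfolding J_def by (intro nn_integral_mono b)
        also have "\<dots> = ?c * emeasure lborel {r/2..r}"
          by (rule nn_integral_cmult_indicator) simp
        also have "emeasure lborel {r/2..r} = ennreal (r/2)" using r by simp
        also have "?c * ennreal (r/2) = ennreal K * E x"
        proof -
          have "ennreal (2*K/r) * ennreal (r/2) = ennreal (2*K/r * (r/2))"
            using r K by (intro ennreal_mult'[symmetric]) simp
          also have "2*K/r * (r/2) = K" using r by simp
          finally show ?thesis by (metis mult.assoc mult.commute)
        qed
        finally show ?thesis .
      qed
      have KK: "ennreal K * ennreal (1/K) = 1"
      proof -
        have "ennreal K * ennreal (1/K) = ennreal (K * (1/K))"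
          using K by (intro ennreal_mult'[symmetric]) simp
        also have "K * (1/K) = 1" using K by simp
        finally show ?thesis by simp
      qed
      have "(\<integral>\<^sup>+ x. J x \<partial>lborel) = (\<integral>\<^sup>+ x. ennreal K * (J x * ennreal (1/K)) \<partial>lborel)"
        by (intro nn_integral_cong) (metis KK mult.assoc mult.commute mult_1)
      also have "\<dots> = ennreal K * (\<integral>\<^sup>+ x. J x * ennreal (1/K) \<partial>lborel)"
        by (intro nn_integral_cmult) measurable
      also have "(\<integral>\<^sup>+ x. J x * ennreal (1/K) \<partial>lborel) = (\<integral>\<^sup>+ x. J x * ennreal (1/K) \<partial>lebesgue)"
        by (rule nn_integral_completion[symmetric])
      also have "\<dots> \<le> (\<integral>\<^sup>+ x. E x \<partial>lebesgue)"
      proof (intro nn_integral_mono)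
        fix x
        have "J x * ennreal (1/K) \<le> ennreal K * E x * ennreal (1/K)"
          using pt by (intro mult_right_mono) auto
        also have "\<dots> = E x" using KK by (metis mult.assoc mult.commute mult_1)
        finally show "J x * ennreal (1/K) \<le> E x" .
      qed
      finally show ?thesis unfolding J_def by (simp add: mult_left_mono)
    qed
    finally show "(\<integral>\<^sup>+ \<rho> \<in> {0<..}. epowr (ball_avg u a \<rho>) q
               * ennreal (\<rho> powr ((real DIM('a) - \<alpha>) * q + real DIM('a) - 1)) \<partial>lborel)
           \<le> ennreal K * (\<integral>\<^sup>+ x. epowr (riesz_conv \<alpha> u x) q \<partial>lebesgue)"
      unfolding E_def .
  qed
qed
end
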